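(* There are absolute constants $\varepsilon_0\in(0,1)$ and $C>0$ such that the following holds. Let $d\ge2$, $x_0\ge3$, $f\in\mathcal{M}(x_0;d)$ and $1\le x\le x_0$, and for $1\le j\le d-1$ put $\sigma_j := \sum_{p\le x,\ f(p)=e(j/d)} \frac1p$. Let $\varepsilon\in(0,\varepsilon_0)$ with $\varepsilon P^-(d) > 1$, and assume $\sigma_m < \varepsilon \sum_{1 \leq j \leq d-1} \sigma_j$ for all $1 \leq m \leq d-1$. Then the number of $1\le\ell\le d-1$ for which $$\mathbb{D}(f^{\ell},1;x)^2 < \Big(\frac{2}{3} - C\varepsilon^{1/3}\Big) \sum_{1 \leq j \leq d-1} \sigma_j$$ is at most $C\varepsilon^{1/3} d$.
   Context: Sums over $p$ are over primes; $e(t):=e^{2\pi i t}$; $P^-(d)$ is the smallest prime factor of $d$; $\mu_d$ is the set of complex $d$-th roots of unity. For $g,h:\mathbb{N}\to\{|z|\le1\}$ and $x\ge2$, $\mathbb{D}(g,h;x):=\big(\sum_{p\le x}\frac{1-\mathrm{Re}(g(p)\overline{h(p)})}{p}\big)^{1/2}$, and $1$ denotes the constant function $1$. For $d\in\mathbb{N}$ and $x_0\ge1$, $\mathcal{M}(x_0;d)$ is the set of completely multiplicative functions $f:\mathbb{N}\to\mu_d\cup\{0\}$ such that for every $x\ge x_0$, $\max_{\alpha\in\mu_d}|\{n\le x: f(n)=\alpha\}|\le \frac{100x}{d}\prod_{p\le x,\ f(p)=0}(1-\frac1p)$. *)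

theory Defs
  imports "HOL-Analysis.Analysis" "HOL-Computational_Algebra.Primes"
begin

definition e :: "real \<Rightarrow> complex" where
  "e t = exp (2 * pi * \<i> * complex_of_real t)"

definition roots_of_unity :: "nat \<Rightarrow> complex set" where
  "roots_of_unity d = {z. z ^ d = 1}"

definition least_prime_factor :: "nat \<Rightarrow> nat" where
  "least_prime_factor d = Min (prime_factors d)"

definition completely_multiplicative :: "(nat \<Rightarrow> complex) \<Rightarrow> bool" where
  "completely_multiplicative f \<longleftrightarrow>
     f 1 = 1 \<and> (\<forall>m n. m > 0 \<longrightarrow> n > 0 \<longrightarrow> f (m * n) = f m * f n)"

definition pdist :: "(nat \<Rightarrow> complex) \<Rightarrow> (nat \<Rightarrow> complex) \<Rightarrow> real \<Rightarrow> real" where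
  "pdist g h x = sqrt (\<Sum>p\<in>{p. prime p \<and> real p \<le> x}.
       (1 - Re (g p * cnj (h p))) / real p)"

definition classM :: "real \<Rightarrow> nat \<Rightarrow> (nat \<Rightarrow> complex) set" where
  "classM x0 d = {f. completely_multiplicative f \<and>
     (\<forall>n>0. f n \<in> roots_of_unity d \<union> {0}) \<and>
     (\<forall>x\<ge>x0. \<forall>\<alpha>\<in>roots_of_unity d.
        real (card {n. 1 \<le> n \<and> real n \<le> x \<and> f n = \<alpha>})
          \<le> 100 * x / real d *
             (\<Prod>p\<in>{p. prime p \<and> real p \<le> x \<and> f p = 0}. 1 - 1 / real p))}"

end

theory Submission
  imports Defs
begin

lemma e_add: "e (a + b) = e a * e b"
  unfolding e_def by (simp add: exp_add[symmetric] algebra_simps)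
lemma e_pow: "e t ^ n = e (real n * t)"
  unfolding e_def by (simp add: exp_of_nat_mult[symmetric] algebra_simps)
lemma e_cnj: "cnj (e t) = e (- t)"
  unfolding e_def by (simp add: exp_cnj)
lemma e_norm: "cmod (e t) = 1"
  unfolding e_def by (simp add: norm_exp_eq_Re)
lemma e_one_iff: "e t = 1 \<longleftrightarrow> t \<in> \<int>"
proof -
  have "e t = 1 \<longleftrightarrow> (\<exists>n::int. 2 * pi * t = real_of_int (2 * n) * pi)"
    unfolding e_def exp_eq_1 by simp
  also have "\<dots> \<longleftrightarrow> (\<exists>n::int. t = of_int n)"
  proof -
    have "2 * pi * t = real_of_int (2 * n) * pi \<longleftrightarrow> t = of_int n" for n::int
      using pi_gt_zero by (simp add: mult_ac)
    thus ?thesis by simp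
  qed
  also have "\<dots> \<longleftrightarrow> t \<in> \<int>" by (metis Ints_cases Ints_of_int)
  finally show ?thesis .
qed
lemma ep: "0 < (x::real) \<Longrightarrow> x < 1 \<Longrightarrow> x \<le> x powr (1/3)"
  using powr_mono'[of "1/3" 1 x] by simp

lemma frac_int:
  assumes "j < d" "k < d" "(real j - real k) / real d \<in> \<int>"
  shows "j = k"
proof (rule ccontr)
  assume ne: "j \<noteq> k"
  have d0: "d > 0" using assms by auto
  obtain n where n: "(real j - real k) / real d = of_int n"
    using assms(3) by (auto elim: Ints_cases)
  hence n2: "real j - real k = of_int n * real d" using d0 by (simp add: field_simps)
  have "n \<noteq> 0" using n2 ne by auto
  hence "\<bar>of_int n * real d\<bar> \<ge> real d" using d0
    by (simp add: abs_mult)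
  moreover have "\<bar>real j - real k\<bar> < real d" using assms by auto
  ultimately show False using n2 by simp
qed

lemma orth:
  assumes "j < d" "k < d"
  shows "(\<Sum>l<d. (e (real j / real d) * cnj (e (real k / real d))) ^ l) = (if j = k then of_nat d else 0)"
proof (cases "j = k")
  case True
  then show ?thesis using e_norm[of "real k / real d"]
    by (metis complex_norm_square of_real_1 one_power2 power_one sum_gp_strict)
next
  case False
  define q where "q = e (real j / real d) * cnj (e (real k / real d))"
  have q: "q = e ((real j - real k) / real d)"
    unfolding q_def e_cnj by (simp add: e_add[symmetric] diff_divide_distrib)
  have d0: "d > 0" using assms by auto
  have "q ^ d = e (real j - real k)" unfolding q e_pow using d0 by simp
  also have "\<dots> = 1" using e_one_iff by simp
  finally have qd: "q ^ d = 1" .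
  have "q \<noteq> 1"
  proof
    assume "q = 1"
    hence "(real j - real k) / real d \<in> \<int>" using q e_one_iff by simp
    thus False using frac_int assms False by blast
  qed
  then show ?thesis using False qd unfolding q_def[symmetric] by (simp add: geometric_sum)
qed
lemma parseval:
  fixes \<sigma> :: "nat \<Rightarrow> real" and d :: nat
  assumes d0: "d > 0"
  shows "(\<Sum>l<d. (cmod (\<Sum>j=1..d-1. of_real (\<sigma> j) * e (real j / real d) ^ l))\<^sup>2)
     = real d * (\<Sum>j=1..d-1. (\<sigma> j)\<^sup>2)"
proof -
  define w where "w j = e (real j / real d)" for j
  have "complex_of_real (\<Sum>l<d. (cmod (\<Sum>j=1..d-1. of_real (\<sigma> j) * w j ^ l))\<^sup>2)
     = (\<Sum>l<d. (\<Sum>j=1..d-1. of_real (\<sigma> j) * w j ^ l) * cnj (\<Sum>k=1..d-1. of_real (\<sigma> k) * w k ^ l))"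
    by (simp only: of_real_sum complex_norm_square)
  also have "\<dots> = (\<Sum>l<d. \<Sum>j=1..d-1. \<Sum>k=1..d-1. of_real (\<sigma> j * \<sigma> k) * (w j * cnj (w k)) ^ l)"
    by (simp add: sum_product cnj_sum power_mult_distrib mult_ac)
  also have "\<dots> = (\<Sum>j=1..d-1. \<Sum>k=1..d-1. of_real (\<sigma> j * \<sigma> k) * (\<Sum>l<d. (w j * cnj (w k)) ^ l))"
    by (simp add: sum_distrib_left sum.swap[of _ "{..<d}"])
  also have "\<dots> = (\<Sum>j=1..d-1. \<Sum>k=1..d-1. of_real (\<sigma> j * \<sigma> k) * (if j = k then of_nat d else 0))"
  proof -
    have o: "(\<Sum>l<d. (w j * cnj (w k)) ^ l) = (if j = k then of_nat d else 0)"
      if "j \<in> {1..d-1}" "k \<in> {1..d-1}" for j k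
      using orth[of j d k] that d0 unfolding w_def by auto
    show ?thesis by (intro sum.cong refl) (simp add: o)
  qed
  also have "\<dots> = complex_of_real (real d * (\<Sum>j=1..d-1. (\<sigma> j)\<^sup>2))"
    by (simp add: sum_distrib_left power2_eq_square mult_ac if_distrib sum.delta cong: if_cong)
  finally show ?thesis unfolding w_def using of_real_eq_iff by blast
qed
lemma e_eq_diff: "e a = e b \<Longrightarrow> a - b \<in> \<int>"
proof -
  assume h: "e a = e b"
  have "e (a - b) = e a * e (- b)" using e_add[of a "-b"] by simp
  also have "\<dots> = e (b + - b)" using h e_add[of b "-b"] by simp
  also have "\<dots> = 1" using e_one_iff by simp
  finally show ?thesis using e_one_iff by blast
qed

lemma main:
  fixes d :: nat and f :: "nat \<Rightarrow> complex" and x \<epsilon> :: real and \<sigma> :: "nat \<Rightarrow> real"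
  assumes d2: "d \<ge> 2" and fM: "\<forall>n>0. f n \<in> roots_of_unity d \<union> {0}"
  and eps: "0 < \<epsilon>" "\<epsilon> < 1"
  and sdef: "\<sigma> = (\<lambda>j. \<Sum>p\<in>{p. prime p \<and> real p \<le> x \<and> f p = e (real j / real d)}. 1 / real p)"
  and hyp: "\<forall>m\<in>{1..d-1}. \<sigma> m < \<epsilon> * (\<Sum>j=1..d-1. \<sigma> j)"
  shows "real (card {l\<in>{1..d-1}. (pdist (\<lambda>n. f n ^ l) (\<lambda>_. 1) x)\<^sup>2
                < (2/3 - 9 * \<epsilon> powr (1/3)) * (\<Sum>j=1..d-1. \<sigma> j)})
          \<le> 9 * \<epsilon> powr (1/3) * real d"
proof -
  define T where "T = (\<Sum>j=1..d-1. \<sigma> j)"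
  define P where "P = {p. prime p \<and> real p \<le> x}"
  define Q where "Q j = {p. prime p \<and> real p \<le> x \<and> f p = e (real j / real d)}" for j
  define S where "S l = (\<Sum>j=1..d-1. of_real (\<sigma> j) * e (real j / real d) ^ l)" for l
  define B where "B = {l\<in>{1..d-1}. (pdist (\<lambda>n. f n ^ l) (\<lambda>_. 1) x)\<^sup>2
                < (2/3 - 9 * \<epsilon> powr (1/3)) * T}"
  have d0: "d > 0" using d2 by simp
  have finP: "finite P"
    by (rule finite_subset[of _ "{..nat \<lfloor>x\<rfloor>}"]) (auto simp: P_def le_nat_floor)
  have QP: "Q j \<subseteq> P" for j by (auto simp: Q_def P_def)
  have sQ: "\<sigma> j = (\<Sum>p\<in>Q j. 1 / real p)" for j by (simp add: sdef Q_def)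
  have snn: "\<sigma> j \<ge> 0" for j unfolding sQ by (intro sum_nonneg) auto
  have one: "1 \<in> {1..d-1}" using d2 by auto
  have Tpos: "T > 0"
  proof -
    have "0 \<le> \<sigma> 1" by (rule snn)
    also have "\<sigma> 1 < \<epsilon> * T" using hyp one by (simp add: T_def)
    finally show ?thesis using eps by (simp add: zero_less_mult_iff)
  qed
  have sq: "(\<Sum>j=1..d-1. (\<sigma> j)\<^sup>2) \<le> \<epsilon> * T\<^sup>2"
  proof -
    have "(\<Sum>j=1..d-1. (\<sigma> j)\<^sup>2) \<le> (\<Sum>j=1..d-1. \<sigma> j * (\<epsilon> * T))"
    proof (intro sum_mono)
      fix j assume "j \<in> {1..d-1}"
      hence "\<sigma> j \<le> \<epsilon> * T" using hyp by (auto simp: T_def intro: less_imp_le)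
      thus "(\<sigma> j)\<^sup>2 \<le> \<sigma> j * (\<epsilon> * T)"
        unfolding power2_eq_square by (intro mult_left_mono snn)
    qed
    also have "\<dots> = T * (\<epsilon> * T)" unfolding T_def by (simp add: sum_distrib_right)
    also have "\<dots> = \<epsilon> * T\<^sup>2" by (simp add: power2_eq_square)
    finally show ?thesis .
  qed
  have fnorm: "cmod (f p) \<le> 1" if "prime p" for p
  proof -
    have "f p \<in> roots_of_unity d \<union> {0}" using fM that prime_gt_0_nat by blast
    thus ?thesis using power_eq_1_iff[of "f p" d] d0 by (auto simp: roots_of_unity_def)
  qed
  have lower: "T - Re (S l) \<le> (pdist (\<lambda>n. f n ^ l) (\<lambda>_. 1) x)\<^sup>2" for l
  proof -
    define g where "g p = (1 - Re (f p ^ l)) / real p" for p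
    have gnn: "g p \<ge> 0" if "p \<in> P" for p
    proof -
      have "Re (f p ^ l) \<le> cmod (f p ^ l)" by (rule complex_Re_le_cmod)
      also have "\<dots> = cmod (f p) ^ l" by (simp add: norm_power)
      also have "\<dots> \<le> 1" using fnorm[of p] that by (simp add: P_def power_le_one)
      finally show ?thesis by (simp add: g_def)
    qed
    have pd: "(pdist (\<lambda>n. f n ^ l) (\<lambda>_. 1) x)\<^sup>2 = (\<Sum>p\<in>P. g p)"
      unfolding pdist_def g_def P_def[symmetric] using gnn
      by (simp add: sum_nonneg g_def)
    have "(\<Sum>p\<in>(\<Union>j\<in>{1..d-1}. Q j). g p) \<le> (\<Sum>p\<in>P. g p)"
      by (intro sum_mono2 finP) (use QP gnn in auto)
    moreover have "(\<Sum>p\<in>(\<Union>j\<in>{1..d-1}. Q j). g p) = (\<Sum>j\<in>{1..d-1}. \<Sum>p\<in>Q j. g p)"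
    proof (rule sum.UNION_disjoint)
      show "\<forall>j\<in>{1..d-1}. finite (Q j)" using QP finP finite_subset by blast
      show "\<forall>j\<in>{1..d-1}. \<forall>k\<in>{1..d-1}. j \<noteq> k \<longrightarrow> Q j \<inter> Q k = {}"
      proof (intro ballI impI)
        fix j k assume jk: "j \<in> {1..d-1}" "k \<in> {1..d-1}" "j \<noteq> k"
        show "Q j \<inter> Q k = {}"
        proof (rule ccontr)
          assume "Q j \<inter> Q k \<noteq> {}"
          then have "e (real j / real d) = e (real k / real d)" by (auto simp: Q_def)
          hence "real j / real d - real k / real d \<in> \<int>" by (rule e_eq_diff)
          hence "(real j - real k) / real d \<in> \<int>" by (simp add: diff_divide_distrib)
          moreover have "j < d" "k < d" using jk d0 by auto
          ultimately have "j = k" using frac_int[of j d k] by blast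
          thus False using jk by simp
        qed
      qed
    qed simp
    moreover have "(\<Sum>j\<in>{1..d-1}. \<Sum>p\<in>Q j. g p) = (\<Sum>j\<in>{1..d-1}. (1 - Re (e (real j / real d) ^ l)) * \<sigma> j)"
    proof (intro sum.cong refl)
      fix j
      have "(\<Sum>p\<in>Q j. g p) = (\<Sum>p\<in>Q j. (1 - Re (e (real j / real d) ^ l)) * (1 / real p))"
        by (intro sum.cong refl) (simp add: g_def Q_def)
      thus "(\<Sum>p\<in>Q j. g p) = (1 - Re (e (real j / real d) ^ l)) * \<sigma> j"
        by (simp add: sQ sum_distrib_left)
    qed
    moreover have "(\<Sum>j\<in>{1..d-1}. (1 - Re (e (real j / real d) ^ l)) * \<sigma> j) = T - Re (S l)"
      by (simp add: S_def T_def Re_sum algebra_simps sum_subtractf)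
    ultimately show ?thesis using pd by linarith
  qed
  have bad: "(T / 3)\<^sup>2 < (cmod (S l))\<^sup>2" if "l \<in> B" for l
  proof -
    have "0 \<le> \<epsilon> powr (1/3)" by simp
    hence "(2/3 - 9 * \<epsilon> powr (1/3)) * T \<le> 2/3 * T" using Tpos by (intro mult_right_mono) auto
    hence "T - Re (S l) < 2/3 * T" using lower[of l] that unfolding B_def by auto
    hence "T / 3 < Re (S l)" by simp
    also have "\<dots> \<le> cmod (S l)" by (rule complex_Re_le_cmod)
    finally show ?thesis using Tpos by (intro power_strict_mono) auto
  qed
  have finB: "finite B" and Bsub: "B \<subseteq> {..<d}" using d0 by (auto simp: B_def)
  have "real (card B) * (T / 3)\<^sup>2 = (\<Sum>l\<in>B. (T / 3)\<^sup>2)" by simp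
  also have "\<dots> \<le> (\<Sum>l\<in>B. (cmod (S l))\<^sup>2)" by (intro sum_mono less_imp_le bad)
  also have "\<dots> \<le> (\<Sum>l<d. (cmod (S l))\<^sup>2)" by (intro sum_mono2 Bsub) auto
  also have "\<dots> = real d * (\<Sum>j=1..d-1. (\<sigma> j)\<^sup>2)" unfolding S_def by (rule parseval[OF d0])
  also have "\<dots> \<le> real d * (\<epsilon> * T\<^sup>2)" by (intro mult_left_mono sq) auto
  finally have "real (card B) * T\<^sup>2 \<le> (9 * \<epsilon> * real d) * T\<^sup>2"
    by (simp add: power_divide field_simps)
  hence cB: "real (card B) \<le> 9 * \<epsilon> * real d" using Tpos by simp
  have "9 * \<epsilon> * real d \<le> 9 * \<epsilon> powr (1/3) * real d"
    using ep[OF eps] by (intro mult_right_mono) auto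
  with cB show ?thesis unfolding B_def T_def by linarith
qed
theorem lemma3p2:
  shows "\<exists>\<epsilon>0 C :: real. 0 < \<epsilon>0 \<and> \<epsilon>0 < 1 \<and> 0 < C \<and>
    (\<forall>(d::nat) (x0::real) f (x::real) (\<epsilon>::real).
       d \<ge> 2 \<longrightarrow> x0 \<ge> 3 \<longrightarrow> f \<in> classM x0 d \<longrightarrow> 1 \<le> x \<longrightarrow> x \<le> x0 \<longrightarrow>
       0 < \<epsilon> \<longrightarrow> \<epsilon> < \<epsilon>0 \<longrightarrow> \<epsilon> * real (least_prime_factor d) > 1 \<longrightarrow>
       (let \<sigma> = (\<lambda>j::nat. \<Sum>p\<in>{p. prime p \<and> real p \<le> x \<and> f p = e (real j / real d)}. 1 / real p)
        in (\<forall>m\<in>{1..d-1}. \<sigma> m < \<epsilon> * (\<Sum>j=1..d-1. \<sigma> j)) \<longrightarrow>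
           real (card {l\<in>{1..d-1}.
              (pdist (\<lambda>n. f n ^ l) (\<lambda>_. 1) x)\<^sup>2
                < (2/3 - C * \<epsilon> powr (1/3)) * (\<Sum>j=1..d-1. \<sigma> j)})
             \<le> C * \<epsilon> powr (1/3) * real d))"
proof -
  have H: "let \<sigma> = (\<lambda>j::nat. \<Sum>p\<in>{p. prime p \<and> real p \<le> x \<and> f p = e (real j / real d)}. 1 / real p)
        in (\<forall>m\<in>{1..d-1}. \<sigma> m < \<epsilon> * (\<Sum>j=1..d-1. \<sigma> j)) \<longrightarrow>
           real (card {l\<in>{1..d-1}.
              (pdist (\<lambda>n. f n ^ l) (\<lambda>_. 1) x)\<^sup>2
                < (2/3 - 9 * \<epsilon> powr (1/3)) * (\<Sum>j=1..d-1. \<sigma> j)})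
             \<le> 9 * \<epsilon> powr (1/3) * real d"
    if d2: "d \<ge> 2" and fM: "f \<in> classM x0 d" and eps: "0 < \<epsilon>" "\<epsilon> < 1"
    for d :: nat and x0 x \<epsilon> :: real and f
  proof -
    have fr: "\<forall>n>0. f n \<in> roots_of_unity d \<union> {0}" using fM by (simp add: classM_def)
    show ?thesis
      unfolding Let_def using main[OF d2 fr eps refl] by blast
  qed
  show ?thesis
    apply (rule exI[of _ "1/2"], rule exI[of _ 9])
    apply (intro conjI allI impI)
       apply simp
      apply simp
     apply simp
    apply (rule H)
       apply assumption+
    apply simp
    done
qed

end
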